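(* Let $a\in C^\infty(\mathbb{R})$ satisfy condition (A). The function \[ q(\xi_1,\xi_2):=\frac{\xi_1a(\xi_1)+\xi_2a(\xi_2)}{\xi_1+\xi_2},\qquad(\xi_1,\xi_2)\in\mathbb{R}^2,\ \xi_1+\xi_2\ne0, \] extends to a smooth positive function on $\mathbb{R}^2$ (namely $q(\xi_1,\xi_2)=\int_0^1(\xi a(\xi))'(-\xi_2+(\xi_1+\xi_2)t)\,dt$). Moreover, with $\xi_{\max}:=|\xi_1|\vee|\xi_2|$: (i) $q(\xi_1,\xi_2)\sim a(\xi_{\max})$, and $|\partial_1^{\gamma_1}\partial_2^{\gamma_2}q(\xi_1,\xi_2)|\lesssim\langle\xi_1\rangle^{-\gamma_1}\langle\xi_2\rangle^{-\gamma_2}a(\xi_{\max})$ for $1\le\gamma_1+\gamma_2\le3$; (ii) $|\partial_1^{\gamma_1}\partial_2^{\gamma_2}(\partial_1-\partial_2)q(\xi_1,\xi_2)|\lesssim\langle\xi_1\rangle^{-\gamma_1}\langle\xi_2\rangle^{-\gamma_2}\langle\xi_{\max}\rangle^{-1}a(\xi_{\max})$ for $0\le\gamma_1+\gamma_2\le3$, for all $(\xi_1,\xi_2)\in\mathbb{R}^2$, with implicit constants depending only on those in (A).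
   Context: Condition (A) on $a$: $a$ is positive, even, non-decreasing on $[0,\infty)$, constant on $[-1,1]$; $a(2\xi)\lesssim a(\xi)$ for all $\xi>0$; $a(N_1)/a(N_2)\gtrsim(N_1/N_2)^{1/2}$ for all dyadic $N_1>N_2\ge1$ (dyadic meaning powers of $2$); $|\partial_\xi^ja(\xi)|\lesssim\langle\xi\rangle^{-j}a(\xi)$ for all $\xi\in\mathbb{R}$, $1\le j\le5$, where $\langle\xi\rangle=(1+\xi^2)^{1/2}$. $A\sim B$ means $A\lesssim B\lesssim A$. *)

theory Defs
  imports "HOL-Analysis.Analysis"
begin

definition jbr :: "real \<Rightarrow> real" where
  "jbr x = sqrt (1 + x\<^sup>2)"

definition smooth1 :: "(real \<Rightarrow> real) \<Rightarrow> bool" where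
  "smooth1 f \<longleftrightarrow> (\<forall>k x. ((deriv ^^ k) f) differentiable (at x))"

definition pd1 :: "(real \<times> real \<Rightarrow> real) \<Rightarrow> real \<times> real \<Rightarrow> real" where
  "pd1 f = (\<lambda>(x, y). deriv (\<lambda>s. f (s, y)) x)"

definition pd2 :: "(real \<times> real \<Rightarrow> real) \<Rightarrow> real \<times> real \<Rightarrow> real" where
  "pd2 f = (\<lambda>(x, y). deriv (\<lambda>s. f (x, s)) y)"

definition pdw :: "bool list \<Rightarrow> (real \<times> real \<Rightarrow> real) \<Rightarrow> real \<times> real \<Rightarrow> real" where
  "pdw ds f = foldr (\<lambda>d g. if d then pd1 g else pd2 g) ds f"

text \<open>C^infinity on R^2: all iterated partial derivatives, in any order, exist everywhere
  and are continuous (this is equivalent to being C^infinity).\<close>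
definition smooth2 :: "(real \<times> real \<Rightarrow> real) \<Rightarrow> bool" where
  "smooth2 f \<longleftrightarrow> (\<forall>ds. continuous_on UNIV (pdw ds f) \<and>
      (\<forall>x y. (\<lambda>s. pdw ds f (s, y)) differentiable (at x) \<and>
             (\<lambda>s. pdw ds f (x, s)) differentiable (at y)))"

text \<open>Condition (A) with all implicit constants bounded by a single constant C.\<close>
definition condA :: "real \<Rightarrow> (real \<Rightarrow> real) \<Rightarrow> bool" where
  "condA C a \<longleftrightarrow>
     (\<forall>x. a x > 0) \<and> (\<forall>x. a (- x) = a x) \<and> mono_on {0..} a \<and>
     (\<forall>x\<in>{-1..1}. a x = a 0) \<and>
     (\<forall>x>0. a (2 * x) \<le> C * a x) \<and>
     (\<forall>m n :: nat. (2::real) ^ m > 2 ^ n \<longrightarrow>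
        a (2 ^ m) / a (2 ^ n) \<ge> (1 / C) * sqrt (2 ^ m / 2 ^ n)) \<and>
     (\<forall>j\<in>{1..5::nat}. \<forall>x. \<bar>(deriv ^^ j) a x\<bar> \<le> C * a x / jbr x ^ j)"

end

theory Submission
  imports Defs
begin

definition FF :: "(nat \<Rightarrow> real \<Rightarrow> real) \<Rightarrow> (real \<Rightarrow> real) \<Rightarrow> nat \<Rightarrow> real \<times> real \<Rightarrow> real" where
  "FF D w k z = integral {0..1} (\<lambda>t. w t * D k (- snd z + (fst z + snd z) * t))"

context
  fixes D :: "nat \<Rightarrow> real \<Rightarrow> real"
  assumes hD: "\<And>k s. (D k has_real_derivative D (Suc k) s) (at s)"
begin

lemma D_cont:
  shows "continuous_on UNIV (D k)"
  by (meson DERIV_isCont continuous_at_imp_continuous_on hD)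

lemma FF_integrable:
  assumes w: "continuous_on UNIV w"
  shows "(\<lambda>t. w t * D k (- y + (x + y) * t)) integrable_on {a..b}"
proof -
  have "continuous_on {a..b} (\<lambda>t. w t * D k (- y + (x + y) * t))"
    by (intro continuous_intros continuous_on_subset[OF w] continuous_on_compose2[OF D_cont]) auto
  then show ?thesis by (rule integrable_continuous_real)
qed

lemma FF_d2:
  assumes w: "continuous_on UNIV w"
  shows "((\<lambda>s. FF D w k (x, s)) has_real_derivative FF D (\<lambda>t. (t - 1) * w t) (Suc k) (x, y)) (at y)"
proof -
  note cD = D_cont
  have "((\<lambda>s. integral (cbox 0 1) (\<lambda>t. w t * D k (-s + (x+s)*t))) has_field_derivative
      integral (cbox 0 (1::real)) (\<lambda>t. w t * (D (Suc k) (-y+(x+y)*t) * (t - 1)))) (at y within UNIV)"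
  proof (rule leibniz_rule_field_derivative[where fx="\<lambda>s t. w t * (D (Suc k) (-s+(x+s)*t) * (t - 1))"])
    fix s t :: real
    have "((\<lambda>s. -s + (x+s)*t) has_real_derivative (t - 1)) (at s)"
      by (auto intro!: derivative_eq_intros)
    from DERIV_chain2[OF hD this]
    show "((\<lambda>s. w t * D k (-s + (x+s)*t)) has_real_derivative w t * (D (Suc k) (-s+(x+s)*t) * (t - 1))) (at s within UNIV)"
      by (intro DERIV_cmult) auto
  next
    fix s :: real
    show "(\<lambda>t. w t * D k (-s + (x+s)*t)) integrable_on cbox 0 1"
      using FF_integrable[OF w] by (simp add: cbox_interval)
  next
    show "continuous_on (UNIV \<times> cbox 0 1) (\<lambda>(s, t). w t * (D (Suc k) (-s+(x+s)*t) * (t - 1)))"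
      by (auto simp: split_beta intro!: continuous_intros continuous_on_compose2[OF w] continuous_on_compose2[OF cD])
  qed auto
  then show ?thesis
    unfolding FF_def by (simp add: cbox_interval mult_ac)
qed

lemma FF_d1:
  assumes w: "continuous_on UNIV w"
  shows "((\<lambda>s. FF D w k (s, y)) has_real_derivative FF D (\<lambda>t. t * w t) (Suc k) (x, y)) (at x)"
proof -
  note cD = D_cont
  have "((\<lambda>s. integral (cbox 0 1) (\<lambda>t. w t * D k (-y + (s+y)*t))) has_field_derivative
      integral (cbox 0 (1::real)) (\<lambda>t. w t * (D (Suc k) (-y+(x+y)*t) * t))) (at x within UNIV)"
  proof (rule leibniz_rule_field_derivative[where fx="\<lambda>s t. w t * (D (Suc k) (-y+(s+y)*t) * t)"])
    fix s t :: real
    have "((\<lambda>s. -y + (s+y)*t) has_real_derivative t) (at s)"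
      by (auto intro!: derivative_eq_intros)
    from DERIV_chain2[OF hD this]
    show "((\<lambda>s. w t * D k (-y + (s+y)*t)) has_real_derivative w t * (D (Suc k) (-y+(s+y)*t) * t)) (at s within UNIV)"
      by (intro DERIV_cmult) auto
  next
    fix s :: real
    show "(\<lambda>t. w t * D k (-y + (s+y)*t)) integrable_on cbox 0 1"
      using FF_integrable[OF w] by (simp add: cbox_interval)
  next
    show "continuous_on (UNIV \<times> cbox 0 1) (\<lambda>(s, t). w t * (D (Suc k) (-y+(s+y)*t) * t))"
      by (auto simp: split_beta intro!: continuous_intros continuous_on_compose2[OF w] continuous_on_compose2[OF cD])
  qed auto
  then show ?thesis
    unfolding FF_def by (simp add: cbox_interval mult_ac)
qed

lemma FF_pd2:
  assumes w: "continuous_on UNIV w"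
  shows "pd2 (FF D w k) = FF D (\<lambda>t. (t - 1) * w t) (Suc k)"
  using FF_d2[OF w] by (auto simp: pd2_def intro!: ext DERIV_imp_deriv)

lemma FF_pd1:
  assumes w: "continuous_on UNIV w"
  shows "pd1 (FF D w k) = FF D (\<lambda>t. t * w t) (Suc k)"
  using FF_d1[OF w] by (auto simp: pd1_def intro!: ext DERIV_imp_deriv)

lemma FF_cont:
  assumes w: "continuous_on UNIV w"
  shows "continuous_on UNIV (FF D w k)"
proof -
  have "continuous_on UNIV (\<lambda>z. integral (cbox 0 1) (\<lambda>t. w t * D k (- snd z + (fst z + snd z) * t)))"
    by (rule integral_continuous_on_param)
      (auto simp: split_beta intro!: continuous_intros continuous_on_compose2[OF w] continuous_on_compose2[OF D_cont])
  then show ?thesis unfolding FF_def[abs_def] by (simp add: cbox_interval)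
qed

lemma FF_diff:
  assumes "continuous_on UNIV w1" "continuous_on UNIV w2"
  shows "FF D w1 k z - FF D w2 k z = FF D (\<lambda>t. w1 t - w2 t) k z"
  unfolding FF_def
  using integral_diff[OF FF_integrable[OF assms(1), of k "snd z" "fst z" 0 1] FF_integrable[OF assms(2), of k "snd z" "fst z" 0 1]]
  by (simp add: algebra_simps)

lemma FF_ibp:
  assumes dw: "\<And>t. (w has_real_derivative w' t) (at t)" and cw': "continuous_on UNIV w'"
    and s: "x + y \<noteq> 0"
  shows "FF D w (Suc k) (x, y) = (w 1 * D k x - w 0 * D k (- y)) / (x + y) - FF D w' k (x, y) / (x + y)"
proof -
  have cw: "continuous_on UNIV w"
    by (meson DERIV_isCont continuous_at_imp_continuous_on dw)
  define g where "g t = w t * D k (-y + (x+y)*t)" for t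
  have "((\<lambda>t. w' t * D k (-y + (x+y)*t) + w t * (D (Suc k) (-y + (x+y)*t) * (x + y))) has_integral g 1 - g 0) {0..1}"
  proof (rule fundamental_theorem_of_calculus)
    fix t :: real
    have "((\<lambda>t. -y + (x+y)*t) has_real_derivative (x + y)) (at t)"
      by (auto intro!: derivative_eq_intros)
    from DERIV_mult[OF dw DERIV_chain2[OF hD[of k] this]]
    have "(g has_real_derivative w' t * D k (-y + (x+y)*t) + w t * (D (Suc k) (-y + (x+y)*t) * (x + y))) (at t)"
      unfolding g_def by (simp add: mult_ac)
    then show "(g has_vector_derivative w' t * D k (-y + (x+y)*t) + w t * (D (Suc k) (-y + (x+y)*t) * (x + y))) (at t within {0..1})"
      using has_real_derivative_iff_has_vector_derivative has_vector_derivative_at_within by blast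
  qed simp
  moreover have i1: "((\<lambda>t. w' t * D k (-y + (x+y)*t)) has_integral FF D w' k (x, y)) {0..1}"
    unfolding FF_def using FF_integrable[OF cw'] by (simp add: integrable_integral)
  moreover have i2: "((\<lambda>t. w t * D (Suc k) (-y + (x+y)*t)) has_integral FF D w (Suc k) (x, y)) {0..1}"
    unfolding FF_def using FF_integrable[OF cw] by (simp add: integrable_integral)
  ultimately have "g 1 - g 0 = FF D w' k (x, y) + FF D w (Suc k) (x, y) * (x + y)"
    using has_integral_unique has_integral_add[OF i1 has_integral_mult_left[OF i2, of "x+y"]]
    by (simp add: mult_ac)
  moreover have "g 1 = w 1 * D k x" "g 0 = w 0 * D k (- y)" by (simp_all add: g_def)
  ultimately have "FF D w (Suc k) (x, y) * (x + y) = w 1 * D k x - w 0 * D k (- y) - FF D w' k (x, y)"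
    by (simp add: algebra_simps)
  then have "FF D w (Suc k) (x, y) = (w 1 * D k x - w 0 * D k (- y) - FF D w' k (x, y)) / (x + y)"
    using s by (simp add: eq_divide_eq)
  then show ?thesis by (simp add: diff_divide_distrib)
qed

end


lemma pdw_rep:
  assumes hD: "\<And>k s. (D k has_real_derivative D (Suc k) s) (at s)"
    and w0: "continuous_on UNIV w0"
  shows "\<exists>w. continuous_on UNIV w \<and> pdw ds (FF D w0 k) = FF D w (k + length ds)"
proof (induction ds)
  case Nil
  then show ?case using w0 by (auto simp: pdw_def)
next
  case (Cons d ds)
  then obtain w where w: "continuous_on UNIV w" "pdw ds (FF D w0 k) = FF D w (k + length ds)" by blast
  have e: "pdw (d # ds) (FF D w0 k) = (if d then pd1 else pd2) (pdw ds (FF D w0 k))"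
    by (simp add: pdw_def)
  show ?case
  proof (cases d)
    case True
    then show ?thesis using e w FF_pd1[of D, OF hD w(1), of "k + length ds"]
      by (intro exI[of _ "\<lambda>t. t * w t"]) (auto intro!: continuous_intros)
  next
    case False
    then show ?thesis using e w FF_pd2[of D, OF hD w(1), of "k + length ds"]
      by (intro exI[of _ "\<lambda>t. (t - 1) * w t"]) (auto intro!: continuous_intros)
  qed
qed

lemma smooth2_FF:
  assumes hD: "\<And>k s. (D k has_real_derivative D (Suc k) s) (at s)"
    and w0: "continuous_on UNIV w0"
  shows "smooth2 (FF D w0 k)"
  unfolding smooth2_def
proof (intro allI conjI)
  fix ds x y
  obtain w where w: "continuous_on UNIV w" "pdw ds (FF D w0 k) = FF D w (k + length ds)"
    using pdw_rep[of D, OF hD w0] by blast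
  show "continuous_on UNIV (pdw ds (FF D w0 k))" using FF_cont[of D, OF hD w(1)] w(2) by simp
  show "(\<lambda>s. pdw ds (FF D w0 k) (s, y)) differentiable at x"
    using FF_d1[of D, OF hD w(1)] w(2) real_differentiable_def by fastforce
  show "(\<lambda>s. pdw ds (FF D w0 k) (x, s)) differentiable at y"
    using FF_d2[of D, OF hD w(1)] w(2) real_differentiable_def by fastforce
qed

lemma A_der:
  assumes "smooth1 a"
  shows "((deriv^^k) a has_real_derivative (deriv^^Suc k) a s) (at s)"
  using assms unfolding smooth1_def by (simp add: DERIV_deriv_iff_real_differentiable)

lemma Dder:
  assumes sa: "smooth1 a"
  shows "((\<lambda>s. s * (deriv^^k) a s + of_nat k * (deriv^^(k-1)) a s) has_real_derivative
     (s * (deriv^^Suc k) a s + of_nat (Suc k) * (deriv^^k) a s)) (at s)"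
proof -
  note h = DERIV_add[OF DERIV_mult[OF DERIV_ident A_der[OF sa, of k]] DERIV_cmult[OF A_der[OF sa, of "k-1"], of "of_nat k"]]
  then show ?thesis using h by (cases k) (auto simp: algebra_simps)
qed

lemma Dform:
  assumes sa: "smooth1 a"
  shows "(deriv^^k) (\<lambda>s. s * a s) = (\<lambda>s. s * (deriv^^k) a s + of_nat k * (deriv^^(k-1)) a s)"
proof (induction k)
  case 0
  then show ?case by simp
next
  case (Suc k)
  have "(deriv^^Suc k) (\<lambda>s. s * a s) = deriv ((deriv^^k) (\<lambda>s. s * a s))" by simp
  also have "\<dots> = (\<lambda>s. s * (deriv^^Suc k) a s + of_nat (Suc k) * (deriv^^k) a s)"
    unfolding Suc by (rule ext, rule DERIV_imp_deriv, rule Dder[OF sa])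
  finally show ?case by simp
qed

lemma D_hasder:
  assumes sa: "smooth1 a"
  shows "((deriv^^k) (\<lambda>s. s * a s) has_real_derivative (deriv^^Suc k) (\<lambda>s. s * a s) s) (at s)"
  unfolding Dform[OF sa] using Dder[OF sa] by simp


lemma jbr_ge1: "1 \<le> jbr s"
  unfolding jbr_def by simp

lemma jbr_pos: "0 < jbr s"
  using jbr_ge1[of s] by linarith

lemma jbr_abs: "\<bar>s\<bar> \<le> jbr s"
  unfolding jbr_def by (simp add: real_le_rsqrt)

lemma jbr_minus: "jbr (- s) = jbr s"
  unfolding jbr_def by simp

lemma jbr_mono: "\<bar>u\<bar> \<le> \<bar>v\<bar> \<Longrightarrow> jbr u \<le> jbr v"
  unfolding jbr_def by (simp add: abs_le_square_iff)

lemma jbr_le2: "\<bar>s\<bar> \<le> 1 \<Longrightarrow> jbr s \<le> 2"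
proof -
  assume "\<bar>s\<bar> \<le> 1"
  then have "jbr s \<le> jbr 1" by (intro jbr_mono) simp
  also have "jbr 1 \<le> 2" unfolding jbr_def by (rule real_le_lsqrt) auto
  finally show ?thesis .
qed

lemma jbr_le2M: "1 \<le> M \<Longrightarrow> jbr M \<le> 2 * M"
  unfolding jbr_def
proof (rule real_le_lsqrt)
  assume "1 \<le> M"
  then have "1 \<le> M * M" using mult_mono[of 1 M 1 M] by simp
  then show "1 + M\<^sup>2 \<le> (2 * M)\<^sup>2" by (simp add: power2_eq_square)
qed auto

lemma jbr_half: "0 \<le> M \<Longrightarrow> M \<le> 2 * \<bar>s\<bar> \<Longrightarrow> jbr M \<le> 2 * jbr s"
proof -
  assume h: "0 \<le> M" "M \<le> 2 * \<bar>s\<bar>"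
  have "M\<^sup>2 \<le> (2 * \<bar>s\<bar>)\<^sup>2" using h by (intro power_mono) auto
  then have "1 + M\<^sup>2 \<le> (2 * jbr s)\<^sup>2" unfolding jbr_def by (simp add: power_mult_distrib)
  then show ?thesis
    using real_le_lsqrt[of "2 * jbr s" "1 + M\<^sup>2"] jbr_pos[of s] unfolding jbr_def by simp
qed

definition Da :: "(real \<Rightarrow> real) \<Rightarrow> nat \<Rightarrow> real \<Rightarrow> real" where
  "Da a k = (deriv^^k) (\<lambda>s. s * a s)"

locale cA =
  fixes C :: real and a :: "real \<Rightarrow> real"
  assumes C: "C > 0" and sa: "smooth1 a" and ca: "condA C a"
begin

lemma apos: "a x > 0"
  using ca unfolding condA_def by blast

lemma aeven: "a (- x) = a x"
  using ca unfolding condA_def by blast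

lemma amono: "0 \<le> u \<Longrightarrow> u \<le> v \<Longrightarrow> a u \<le> a v"
  using ca unfolding condA_def by (meson atLeast_iff mono_onD order_trans)

lemma aabs: "a \<bar>s\<bar> = a s"
  by (cases "s \<ge> 0") (auto simp: aeven)

lemma a_le: "\<bar>s\<bar> \<le> M \<Longrightarrow> a s \<le> a M"
  using amono[of "\<bar>s\<bar>" M] aabs[of s] by simp

lemma A_bnd:
  assumes "j \<le> 5"
  shows "\<bar>(deriv^^j) a s\<bar> * jbr s ^ j \<le> (C + 1) * a s"
proof (cases "j = 0")
  case True
  then show ?thesis using apos[of s] C by (simp add: algebra_simps)
next
  case False
  then have "j \<in> {1..5}" using assms by auto
  then have "\<bar>(deriv^^j) a s\<bar> \<le> C * a s / jbr s ^ j" using ca unfolding condA_def by blast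
  then have "\<bar>(deriv^^j) a s\<bar> * jbr s ^ j \<le> C * a s"
    using jbr_pos[of s] by (simp add: pos_le_divide_eq)
  then show ?thesis using apos[of s] by (simp add: algebra_simps)
qed

lemma D_hasder': "(Da a k has_real_derivative Da a (Suc k) s) (at s)"
  unfolding Da_def by (rule D_hasder[OF sa])

lemma D_bnd:
  assumes "k \<le> 5"
  shows "\<bar>Da a k s\<bar> * jbr s ^ k \<le> 6 * (C + 1) * a s * jbr s"
proof -
  have f: "Da a k s = s * (deriv^^k) a s + of_nat k * (deriv^^(k-1)) a s"
    unfolding Da_def Dform[OF sa] by simp
  have J: "\<bar>s\<bar> \<le> jbr s" "0 < jbr s" by (rule jbr_abs, rule jbr_pos)
  have ap: "0 < a s" by (rule apos)
  have b1: "\<bar>s * (deriv^^k) a s\<bar> * jbr s ^ k \<le> (C + 1) * a s * jbr s"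
  proof -
    have "\<bar>s * (deriv^^k) a s\<bar> * jbr s ^ k = \<bar>s\<bar> * (\<bar>(deriv^^k) a s\<bar> * jbr s ^ k)"
      by (simp add: abs_mult)
    also have "\<dots> \<le> jbr s * ((C + 1) * a s)"
      using mult_mono[OF J(1) A_bnd[OF assms, of s]] J by auto
    finally show ?thesis by (simp add: mult_ac)
  qed
  have b2: "\<bar>of_nat k * (deriv^^(k-1)) a s\<bar> * jbr s ^ k \<le> 5 * (C + 1) * a s * jbr s"
  proof (cases k)
    case 0
    then show ?thesis using ap C J by simp
  next
    case (Suc m)
    have "\<bar>of_nat k * (deriv^^(k-1)) a s\<bar> * jbr s ^ k = of_nat k * (\<bar>(deriv^^m) a s\<bar> * jbr s ^ m) * jbr s"
      using Suc by (simp add: abs_mult mult_ac)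
    also have "\<dots> \<le> 5 * ((C + 1) * a s) * jbr s"
    proof -
      have "of_nat k \<le> (5::real)" using assms by simp
      from mult_mono[OF this A_bnd[of m s]] have "of_nat k * (\<bar>(deriv^^m) a s\<bar> * jbr s ^ m) \<le> 5 * ((C + 1) * a s)"
        using assms Suc jbr_pos[of s] by simp
      then show ?thesis using J by (intro mult_right_mono) auto
    qed
    finally show ?thesis by (simp add: mult_ac)
  qed
  have "\<bar>Da a k s\<bar> * jbr s ^ k \<le> \<bar>s * (deriv^^k) a s\<bar> * jbr s ^ k + \<bar>of_nat k * (deriv^^(k-1)) a s\<bar> * jbr s ^ k"
    unfolding f using J by (simp add: distrib_right[symmetric] abs_triangle_ineq)
  then show ?thesis using b1 b2 by linarith
qed

end

lemma FF_lin:
  fixes D :: "nat \<Rightarrow> real \<Rightarrow> real"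
  assumes hD: "\<And>k s. (D k has_real_derivative D (Suc k) s) (at s)"
    and "continuous_on UNIV w1" "continuous_on UNIV w2"
  shows "FF D (\<lambda>t. c1 * w1 t + c2 * w2 t) k z = c1 * FF D w1 k z + c2 * FF D w2 k z"
  unfolding FF_def
  using integral_add[OF integrable_cmul[OF FF_integrable[of D, OF hD assms(2), of k "snd z" "fst z" 0 1], of c1]
      integrable_cmul[OF FF_integrable[of D, OF hD assms(3), of k "snd z" "fst z" 0 1], of c2]]
  by (simp add: algebra_simps integral_mult_right)

definition ww :: "nat \<Rightarrow> nat \<Rightarrow> real \<Rightarrow> real" where
  "ww \<alpha> \<beta> t = t ^ \<alpha> * (t - 1) ^ \<beta>"

lemma ww_cont: "continuous_on UNIV (ww \<alpha> \<beta>)"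
  unfolding ww_def[abs_def] by (intro continuous_intros)

lemma ww_der: "(ww \<alpha> \<beta> has_real_derivative (of_nat \<alpha> * ww (\<alpha> - 1) \<beta> t + of_nat \<beta> * ww \<alpha> (\<beta> - 1) t)) (at t)"
  unfolding ww_def[abs_def]
  by (auto intro!: derivative_eq_intros simp: algebra_simps)

lemma ww_le1: "t \<in> {0..1} \<Longrightarrow> \<bar>ww \<alpha> \<beta> t\<bar> \<le> 1"
  unfolding ww_def by (auto simp: abs_mult power_abs intro!: mult_le_one power_le_one)

lemma seg_le: "(t::real) \<in> {0..1} \<Longrightarrow> \<bar>- y + (x + y) * t\<bar> \<le> max \<bar>x\<bar> \<bar>y\<bar>"
proof -
  assume t: "t \<in> {0..1}"
  have "- y + (x + y) * t = t * x + (1 - t) * (- y)" by (simp add: algebra_simps)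
  moreover have "\<bar>t * x + (1 - t) * (- y)\<bar> \<le> \<bar>t * x\<bar> + \<bar>(1 - t) * (- y)\<bar>"
    by (rule abs_triangle_ineq)
  ultimately have "\<bar>- y + (x + y) * t\<bar> \<le> t * \<bar>x\<bar> + (1 - t) * \<bar>y\<bar>"
    using t by (simp add: abs_mult)
  also have "\<dots> \<le> t * max \<bar>x\<bar> \<bar>y\<bar> + (1 - t) * max \<bar>x\<bar> \<bar>y\<bar>"
    using t by (intro add_mono mult_left_mono) auto
  finally show ?thesis by (simp add: algebra_simps)
qed


context cA
begin

lemma Cb_pos: "0 < 6 * (C + 1)" using C by simp

lemma ptw:
  fixes x y t :: real
  assumes t: "t \<in> {0..1}" and k: "k = \<alpha> + \<beta> + 1 + e" "k \<le> 5" and e: "e \<le> 1"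
    and cs: "max \<bar>x\<bar> \<bar>y\<bar> \<le> 1 \<or> (1 \<le> max \<bar>x\<bar> \<bar>y\<bar> \<and> 2 * \<bar>x + y\<bar> \<le> max \<bar>x\<bar> \<bar>y\<bar>)"
  shows "\<bar>Da a k (- y + (x + y) * t)\<bar> * (jbr x ^ \<alpha> * jbr y ^ \<beta> * jbr (max \<bar>x\<bar> \<bar>y\<bar>) ^ e)
          \<le> 32 * (6 * (C + 1)) * a (max \<bar>x\<bar> \<bar>y\<bar>)"
proof -
  define M where "M = max \<bar>x\<bar> \<bar>y\<bar>"
  define s where "s = - y + (x + y) * t"
  define Cb where "Cb = 6 * (C + 1)"
  define J where "J = jbr s"
  define P where "P = jbr x ^ \<alpha> * jbr y ^ \<beta> * jbr M ^ e"
  have Cb: "0 < Cb" unfolding Cb_def using C by simp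
  have J1: "1 \<le> J" unfolding J_def by (rule jbr_ge1)
  have sM: "\<bar>s\<bar> \<le> M" unfolding s_def M_def using seg_le[OF t] .
  have aM: "a s \<le> a M" using a_le[OF sM] .
  have aMp: "0 < a M" by (rule apos)
  have P0: "0 \<le> P" unfolding P_def using jbr_pos by (simp add: less_imp_le)
  have Db: "\<bar>Da a k s\<bar> * J ^ k \<le> Cb * a M * J"
  proof -
    have "\<bar>Da a k s\<bar> * J ^ k \<le> Cb * a s * J" unfolding J_def Cb_def using D_bnd[OF k(2)] .
    also have "\<dots> \<le> Cb * a M * J" using Cb aM J1 by (intro mult_right_mono mult_left_mono) auto
    finally show ?thesis .
  qed
  have xM: "\<bar>x\<bar> \<le> M" and yM: "\<bar>y\<bar> \<le> M" unfolding M_def by auto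
  have "\<bar>Da a k s\<bar> * P \<le> 32 * Cb * a M"
  proof (cases "M \<le> 1")
    case True
    have b2: "jbr x \<le> 2" "jbr y \<le> 2" "jbr M \<le> 2" "J \<le> 2"
      using True xM yM sM unfolding J_def by (auto intro!: jbr_le2 simp: M_def)
    have "P \<le> 2 ^ \<alpha> * 2 ^ \<beta> * 2 ^ e" unfolding P_def using b2 jbr_pos
      by (intro mult_mono power_mono) (auto simp: less_imp_le)
    also have "\<dots> = 2 ^ (k - 1)" using k by (simp add: power_add)
    also have "\<dots> \<le> 2 ^ 4" using k by (intro power_increasing) auto
    finally have P16: "P \<le> 16" by simp
    have "\<bar>Da a k s\<bar> \<le> \<bar>Da a k s\<bar> * J ^ k"
      using J1 by (simp add: one_le_power mult_le_cancel_left1)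
    also have "\<dots> \<le> Cb * a M * J" by (rule Db)
    also have "\<dots> \<le> Cb * a M * 2" using b2 Cb aMp by (intro mult_left_mono) auto
    finally have "\<bar>Da a k s\<bar> \<le> 2 * Cb * a M" by simp
    then have "\<bar>Da a k s\<bar> * P \<le> (2 * Cb * a M) * 16"
      using P16 P0 by (intro mult_mono) auto
    then show ?thesis by simp
  next
    case False
    then have M1: "1 \<le> M" and sg: "2 * \<bar>x + y\<bar> \<le> M" using cs M_def by auto
    have s1: "\<bar>s\<bar> \<ge> \<bar>x\<bar> - \<bar>x + y\<bar>"
    proof -
      have "s = x - (x + y) * (1 - t)" unfolding s_def by (simp add: algebra_simps)
      moreover have "\<bar>(x + y) * (1 - t)\<bar> \<le> \<bar>x + y\<bar>" using t by (simp add: abs_mult mult_left_le)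
      ultimately show ?thesis by linarith
    qed
    have s2: "\<bar>s\<bar> \<ge> \<bar>y\<bar> - \<bar>x + y\<bar>"
    proof -
      have "\<bar>(x + y) * t\<bar> \<le> \<bar>x + y\<bar>" using t by (simp add: abs_mult mult_left_le)
      then show ?thesis unfolding s_def by linarith
    qed
    have "M \<le> 2 * \<bar>s\<bar>" using s1 s2 sg unfolding M_def by (simp add: max_def split: if_splits)
    then have jMJ: "jbr M \<le> 2 * J" unfolding J_def using M1 by (intro jbr_half) auto
    have jxM: "jbr x \<le> jbr M" "jbr y \<le> jbr M" using xM yM M1 by (auto intro!: jbr_mono)
    have "P \<le> jbr M ^ \<alpha> * jbr M ^ \<beta> * jbr M ^ e" unfolding P_def using jxM jbr_pos
      by (intro mult_mono power_mono) (auto simp: less_imp_le)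
    also have "\<dots> = jbr M ^ (k - 1)" using k by (simp add: power_add)
    also have "\<dots> \<le> (2 * J) ^ (k - 1)" using jMJ jbr_pos by (intro power_mono) (auto simp: less_imp_le)
    also have "\<dots> = 2 ^ (k - 1) * J ^ (k - 1)" by (simp add: power_mult_distrib)
    also have "\<dots> \<le> 16 * J ^ (k - 1)"
    proof -
      have "(2::real) ^ (k - 1) \<le> 2 ^ 4" using k by (intro power_increasing) auto
      then show ?thesis using J1 by (intro mult_right_mono) auto
    qed
    finally have PJ: "P \<le> 16 * J ^ (k - 1)" .
    have "\<bar>Da a k s\<bar> * J ^ (k - 1) * J \<le> Cb * a M * J"
      using Db k by (simp add: power_Suc2[symmetric] mult.assoc)
    then have DJ: "\<bar>Da a k s\<bar> * J ^ (k - 1) \<le> Cb * a M" using J1 by simp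
    have "\<bar>Da a k s\<bar> * P \<le> \<bar>Da a k s\<bar> * (16 * J ^ (k - 1))"
      using PJ by (intro mult_left_mono) auto
    also have "\<dots> \<le> 16 * (Cb * a M)" using DJ by simp
    also have "\<dots> \<le> 32 * Cb * a M" using Cb aMp by simp
    finally show ?thesis .
  qed
  then show ?thesis unfolding s_def P_def M_def Cb_def by simp
qed


lemma DaD: "\<And>k s. (Da a k has_real_derivative Da a (Suc k) s) (at s)"
  by (rule D_hasder')

lemma FF_AB:
  fixes x y :: real
  assumes k: "k = \<alpha> + \<beta> + 1 + e" "k \<le> 5" and e: "e \<le> 1"
    and cs: "max \<bar>x\<bar> \<bar>y\<bar> \<le> 1 \<or> (1 \<le> max \<bar>x\<bar> \<bar>y\<bar> \<and> 2 * \<bar>x + y\<bar> \<le> max \<bar>x\<bar> \<bar>y\<bar>)"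
  shows "\<bar>FF (Da a) (ww \<alpha> \<beta>) k (x, y)\<bar> * (jbr x ^ \<alpha> * jbr y ^ \<beta> * jbr (max \<bar>x\<bar> \<bar>y\<bar>) ^ e)
          \<le> 32 * (6 * (C + 1)) * a (max \<bar>x\<bar> \<bar>y\<bar>)"
proof -
  define P where "P = jbr x ^ \<alpha> * jbr y ^ \<beta> * jbr (max \<bar>x\<bar> \<bar>y\<bar>) ^ e"
  define B where "B = 32 * (6 * (C + 1)) * a (max \<bar>x\<bar> \<bar>y\<bar>) / P"
  have P: "0 < P" unfolding P_def using jbr_pos by simp
  have "norm (integral {0..1} (\<lambda>t. ww \<alpha> \<beta> t * Da a k (- y + (x + y) * t))) \<le> B * (1 - 0)"
  proof (rule integral_bound)
    show "continuous_on {0..1} (\<lambda>t. ww \<alpha> \<beta> t * Da a k (- y + (x + y) * t))"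
      by (intro continuous_intros continuous_on_subset[OF ww_cont]
          continuous_on_compose2[OF D_cont[of "Da a", OF DaD]]) auto
  next
    fix t :: real assume t: "t \<in> {0..1}"
    have "\<bar>Da a k (- y + (x + y) * t)\<bar> * P \<le> 32 * (6 * (C + 1)) * a (max \<bar>x\<bar> \<bar>y\<bar>)"
      unfolding P_def by (rule ptw[OF t k e cs])
    then have "\<bar>Da a k (- y + (x + y) * t)\<bar> \<le> B" unfolding B_def using P by (simp add: pos_le_divide_eq)
    moreover have "\<bar>ww \<alpha> \<beta> t\<bar> \<le> 1" by (rule ww_le1[OF t])
    ultimately have "\<bar>ww \<alpha> \<beta> t\<bar> * \<bar>Da a k (- y + (x + y) * t)\<bar> \<le> 1 * B"
      by (intro mult_mono) auto
    then show "norm (ww \<alpha> \<beta> t * Da a k (- y + (x + y) * t)) \<le> B" by (simp add: abs_mult)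
  qed simp
  then have "\<bar>FF (Da a) (ww \<alpha> \<beta>) k (x, y)\<bar> \<le> B" unfolding FF_def by simp
  then show ?thesis using P unfolding B_def P_def[symmetric] by (simp add: pos_le_divide_eq)
qed


lemma endpt:
  assumes zM: "\<bar>z\<bar> \<le> M" and e: "e \<le> 1" and m: "m + e \<le> 5"
  shows "\<bar>Da a (m + e) z\<bar> * jbr z ^ m * jbr M ^ e \<le> 6 * (C + 1) * a M * jbr M"
proof -
  define Cb where "Cb = 6 * (C + 1)"
  have Cb: "0 < Cb" unfolding Cb_def using C by simp
  have Z1: "1 \<le> jbr z" by (rule jbr_ge1)
  have ZM: "jbr z \<le> jbr M" using zM by (intro jbr_mono) auto
  have aM: "a z \<le> a M" using a_le[OF zM] .
  have aMp: "0 < a M" by (rule apos)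
  have Db: "\<bar>Da a (m + e) z\<bar> * jbr z ^ (m + e) \<le> Cb * a M * jbr z"
  proof -
    have "\<bar>Da a (m + e) z\<bar> * jbr z ^ (m + e) \<le> Cb * a z * jbr z" unfolding Cb_def using D_bnd[OF m] .
    also have "\<dots> \<le> Cb * a M * jbr z" using Cb aM Z1 by (intro mult_right_mono mult_left_mono) auto
    finally show ?thesis .
  qed
  show ?thesis
  proof (cases "e = 0")
    case True
    have "\<bar>Da a (m + e) z\<bar> * jbr z ^ m * jbr M ^ e \<le> Cb * a M * jbr z" using Db True by simp
    also have "\<dots> \<le> Cb * a M * jbr M" using ZM Cb aMp by (intro mult_left_mono) auto
    finally show ?thesis unfolding Cb_def .
  next
    case False
    then have e1: "e = 1" using e by simp
    have "\<bar>Da a (m + e) z\<bar> * jbr z ^ m * jbr z \<le> Cb * a M * jbr z" using Db e1 by (simp add: mult_ac)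
    then have "\<bar>Da a (m + e) z\<bar> * jbr z ^ m \<le> Cb * a M" using Z1 by simp
    then have "\<bar>Da a (m + e) z\<bar> * jbr z ^ m * jbr M \<le> Cb * a M * jbr M"
      using jbr_pos[of M] by (intro mult_right_mono) auto
    then show ?thesis using e1 unfolding Cb_def by simp
  qed
qed

lemma FF_C:
  fixes x y :: real
  assumes M1: "1 \<le> max \<bar>x\<bar> \<bar>y\<bar>" and sg: "max \<bar>x\<bar> \<bar>y\<bar> \<le> 2 * \<bar>x + y\<bar>"
  shows "n = \<alpha> + \<beta> \<Longrightarrow> n + 1 + e \<le> 5 \<Longrightarrow> e \<le> 1 \<Longrightarrow>
    \<bar>FF (Da a) (ww \<alpha> \<beta>) (n + 1 + e) (x, y)\<bar> * (jbr x ^ \<alpha> * jbr y ^ \<beta> * jbr (max \<bar>x\<bar> \<bar>y\<bar>) ^ e)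
      \<le> 8 * (6 * (C + 1)) * 33 ^ n * a (max \<bar>x\<bar> \<bar>y\<bar>)"
proof (induction n arbitrary: \<alpha> \<beta> rule: less_induct)
  case (less n)
  define M where "M = max \<bar>x\<bar> \<bar>y\<bar>"
  define Cb where "Cb = 6 * (C + 1)"
  define X where "X = jbr x"
  define Y where "Y = jbr y"
  define MM where "MM = jbr M"
  define P where "P = X ^ \<alpha> * Y ^ \<beta> * MM ^ e"
  define AM where "AM = a M"
  define k where "k = n + e"
  define R where "R = (if n = 0 then 0 else 4 * (8 * Cb * 33 ^ (n - 1)))"
  define T1 where "T1 = ww \<alpha> \<beta> 1 * Da a k x"
  define T2 where "T2 = ww \<alpha> \<beta> 0 * Da a k (- y)"
  define F1 where "F1 = FF (Da a) (ww (\<alpha> - 1) \<beta>) k (x, y)"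
  define F2 where "F2 = FF (Da a) (ww \<alpha> (\<beta> - 1)) k (x, y)"
  have Cb: "0 < Cb" unfolding Cb_def using C by simp
  have AM: "0 < AM" unfolding AM_def by (rule apos)
  have R0: "0 \<le> R" unfolding R_def using Cb by simp
  have X1: "1 \<le> X" "X \<le> MM" unfolding X_def MM_def M_def by (auto intro!: jbr_ge1 jbr_mono)
  have Y1: "1 \<le> Y" "Y \<le> MM" unfolding Y_def MM_def M_def by (auto intro!: jbr_ge1 jbr_mono)
  have MM1: "1 \<le> MM" unfolding MM_def by (rule jbr_ge1)
  have P0: "0 < P" unfolding P_def using X1 Y1 MM1 by simp
  have MMs: "MM \<le> 4 * \<bar>x + y\<bar>"
    using jbr_le2M[of M] M1 sg unfolding MM_def M_def by linarith
  have s0: "x + y \<noteq> 0" using M1 sg by auto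
  have n4: "n \<le> 4" using less.prems by simp
  have Suck: "n + 1 + e = Suc k" unfolding k_def by simp
  have eq: "FF (Da a) (ww \<alpha> \<beta>) (Suc k) (x, y) = (T1 - T2) / (x + y) - (of_nat \<alpha> * F1 + of_nat \<beta> * F2) / (x + y)"
  proof -
    have "FF (Da a) (ww \<alpha> \<beta>) (Suc k) (x, y) = (ww \<alpha> \<beta> 1 * Da a k x - ww \<alpha> \<beta> 0 * Da a k (- y)) / (x + y)
        - FF (Da a) (\<lambda>t. of_nat \<alpha> * ww (\<alpha> - 1) \<beta> t + of_nat \<beta> * ww \<alpha> (\<beta> - 1) t) k (x, y) / (x + y)"
      by (rule FF_ibp[of "Da a" "ww \<alpha> \<beta>" "\<lambda>t. of_nat \<alpha> * ww (\<alpha> - 1) \<beta> t + of_nat \<beta> * ww \<alpha> (\<beta> - 1) t", OF DaD ww_der])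
        (auto intro!: continuous_intros continuous_on_compose2[OF ww_cont] s0)
    also have "FF (Da a) (\<lambda>t. of_nat \<alpha> * ww (\<alpha> - 1) \<beta> t + of_nat \<beta> * ww \<alpha> (\<beta> - 1) t) k (x, y) = of_nat \<alpha> * F1 + of_nat \<beta> * F2"
      unfolding F1_def F2_def by (rule FF_lin[of "Da a", OF DaD ww_cont ww_cont])
    finally show ?thesis unfolding T1_def T2_def .
  qed
  have c1: "\<bar>T1\<bar> * P \<le> Cb * AM * MM"
  proof (cases "\<beta> = 0")
    case True
    have "\<bar>Da a (\<alpha> + e) x\<bar> * jbr x ^ \<alpha> * jbr M ^ e \<le> Cb * a M * jbr M"
      unfolding Cb_def by (rule endpt) (use less.prems True in \<open>auto simp: M_def\<close>)
    then show ?thesis using True less.prems unfolding T1_def P_def X_def MM_def AM_def k_def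
      by (simp add: ww_def mult_ac)
  next
    case False
    then show ?thesis using Cb AM MM1 P0 unfolding T1_def by (simp add: ww_def power_0_left)
  qed
  have c2: "\<bar>T2\<bar> * P \<le> Cb * AM * MM"
  proof (cases "\<alpha> = 0")
    case True
    have "\<bar>Da a (\<beta> + e) (- y)\<bar> * jbr (- y) ^ \<beta> * jbr M ^ e \<le> Cb * a M * jbr M"
      unfolding Cb_def by (rule endpt) (use less.prems True in \<open>auto simp: M_def\<close>)
    then show ?thesis using True less.prems unfolding T2_def P_def Y_def MM_def AM_def k_def
      by (simp add: ww_def mult_ac jbr_minus abs_mult power_abs)
  next
    case False
    then show ?thesis using Cb AM MM1 P0 unfolding T2_def by (simp add: ww_def power_0_left)
  qed
  have c3: "of_nat \<alpha> * \<bar>F1\<bar> * P \<le> MM * AM * R"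
  proof (cases \<alpha>)
    case 0
    then show ?thesis using MM1 AM R0 by simp
  next
    case (Suc \<alpha>')
    then have n0: "n \<noteq> 0" "n - 1 = \<alpha>' + \<beta>" using less.prems by auto
    have IH: "\<bar>FF (Da a) (ww \<alpha>' \<beta>) ((n - 1) + 1 + e) (x, y)\<bar> * (X ^ \<alpha>' * Y ^ \<beta> * MM ^ e)
        \<le> 8 * Cb * 33 ^ (n - 1) * AM"
      unfolding X_def Y_def MM_def M_def AM_def Cb_def
      by (rule less.IH) (use n0 less.prems in auto)
    have F1e: "F1 = FF (Da a) (ww \<alpha>' \<beta>) ((n - 1) + 1 + e) (x, y)"
    proof -
      have "k = (n - 1) + 1 + e" unfolding k_def using n0(1) by simp
      then show ?thesis unfolding F1_def using Suc by simp
    qed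
    have "of_nat \<alpha> * \<bar>F1\<bar> * P = (of_nat \<alpha> * X) * (\<bar>F1\<bar> * (X ^ \<alpha>' * Y ^ \<beta> * MM ^ e))"
      unfolding P_def using Suc by (simp add: mult_ac)
    also have "\<dots> \<le> (4 * MM) * (8 * Cb * 33 ^ (n - 1) * AM)"
    proof (rule mult_mono)
      have "of_nat \<alpha> \<le> (4::real)" using Suc n4 less.prems by simp
      then show "of_nat \<alpha> * X \<le> 4 * MM" using X1 by (intro mult_mono) auto
    qed (use IH F1e X1 Y1 MM1 in auto)
    also have "\<dots> = MM * AM * R" unfolding R_def using n0 by simp
    finally show ?thesis .
  qed
  have c4: "of_nat \<beta> * \<bar>F2\<bar> * P \<le> MM * AM * R"
  proof (cases \<beta>)
    case 0
    then show ?thesis using MM1 AM R0 by simp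
  next
    case (Suc \<beta>')
    then have n0: "n \<noteq> 0" "n - 1 = \<alpha> + \<beta>'" using less.prems by auto
    have IH: "\<bar>FF (Da a) (ww \<alpha> \<beta>') ((n - 1) + 1 + e) (x, y)\<bar> * (X ^ \<alpha> * Y ^ \<beta>' * MM ^ e)
        \<le> 8 * Cb * 33 ^ (n - 1) * AM"
      unfolding X_def Y_def MM_def M_def AM_def Cb_def
      by (rule less.IH) (use n0 less.prems in auto)
    have F2e: "F2 = FF (Da a) (ww \<alpha> \<beta>') ((n - 1) + 1 + e) (x, y)"
    proof -
      have "k = (n - 1) + 1 + e" unfolding k_def using n0(1) by simp
      then show ?thesis unfolding F2_def using Suc by simp
    qed
    have "of_nat \<beta> * \<bar>F2\<bar> * P = (of_nat \<beta> * Y) * (\<bar>F2\<bar> * (X ^ \<alpha> * Y ^ \<beta>' * MM ^ e))"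
      unfolding P_def using Suc by (simp add: mult_ac)
    also have "\<dots> \<le> (4 * MM) * (8 * Cb * 33 ^ (n - 1) * AM)"
    proof (rule mult_mono)
      have "of_nat \<beta> \<le> (4::real)" using Suc n4 less.prems by simp
      then show "of_nat \<beta> * Y \<le> 4 * MM" using Y1 by (intro mult_mono) auto
    qed (use IH F2e X1 Y1 MM1 in auto)
    also have "\<dots> = MM * AM * R" unfolding R_def using n0 by simp
    finally show ?thesis .
  qed
  have "\<bar>FF (Da a) (ww \<alpha> \<beta>) (Suc k) (x, y)\<bar> * P = \<bar>T1 - T2 - (of_nat \<alpha> * F1 + of_nat \<beta> * F2)\<bar> * P / \<bar>x + y\<bar>"
    unfolding eq by (simp add: diff_divide_distrib[symmetric] abs_divide)
  also have "\<dots> \<le> (\<bar>T1\<bar> * P + \<bar>T2\<bar> * P + of_nat \<alpha> * \<bar>F1\<bar> * P + of_nat \<beta> * \<bar>F2\<bar> * P) / \<bar>x + y\<bar>"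
  proof (rule divide_right_mono)
    have "\<bar>T1 - T2 - (of_nat \<alpha> * F1 + of_nat \<beta> * F2)\<bar> \<le> \<bar>T1\<bar> + \<bar>T2\<bar> + of_nat \<alpha> * \<bar>F1\<bar> + of_nat \<beta> * \<bar>F2\<bar>"
    proof -
      have g: "\<bar>p - q - (u + v)\<bar> \<le> \<bar>p\<bar> + \<bar>q\<bar> + \<bar>u\<bar> + \<bar>v\<bar>" for p q u v :: real by arith
      show ?thesis using g[of T1 T2 "of_nat \<alpha> * F1" "of_nat \<beta> * F2"] by (simp add: abs_mult)
    qed
    from mult_right_mono[OF this less_imp_le[OF P0]]
    show "\<bar>T1 - T2 - (of_nat \<alpha> * F1 + of_nat \<beta> * F2)\<bar> * P \<le> \<bar>T1\<bar> * P + \<bar>T2\<bar> * P + of_nat \<alpha> * \<bar>F1\<bar> * P + of_nat \<beta> * \<bar>F2\<bar> * P"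
      by (simp add: algebra_simps)
  qed simp
  also have "\<dots> \<le> (MM * (AM * (2 * Cb + 2 * R))) / \<bar>x + y\<bar>"
    using c1 c2 c3 c4 by (intro divide_right_mono) (auto simp: algebra_simps)
  also have "\<dots> \<le> (4 * \<bar>x + y\<bar> * (AM * (2 * Cb + 2 * R))) / \<bar>x + y\<bar>"
    using MMs AM Cb R0 by (intro divide_right_mono mult_right_mono) auto
  also have "\<dots> = AM * (8 * Cb + 8 * R)" using s0 by simp
  also have "\<dots> \<le> AM * (8 * Cb * 33 ^ n)"
  proof (rule mult_left_mono)
    show "8 * Cb + 8 * R \<le> 8 * Cb * 33 ^ n"
    proof (cases "n = 0")
      case True then show ?thesis unfolding R_def by simp
    next
      case False
      then obtain m where m: "n = Suc m" by (cases n) auto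
      have "1 \<le> (33::real) ^ m" by simp
      then have "8 * Cb * 1 + 8 * (4 * (8 * Cb * 33 ^ m)) \<le> 8 * Cb * 33 ^ m + 8 * (4 * (8 * Cb * 33 ^ m))"
        using Cb by (intro add_right_mono mult_left_mono) auto
      then show ?thesis unfolding R_def using m by simp
    qed
  qed (use AM in auto)
  finally show ?case unfolding Suck[symmetric] P_def X_def Y_def MM_def M_def AM_def Cb_def by (simp add: mult_ac)
qed


lemma FF_main:
  fixes x y :: real
  assumes k: "\<alpha> + \<beta> + 1 + e \<le> 5" and e: "e \<le> 1"
  shows "\<bar>FF (Da a) (ww \<alpha> \<beta>) (\<alpha> + \<beta> + 1 + e) (x, y)\<bar> * (jbr x ^ \<alpha> * jbr y ^ \<beta> * jbr (max \<bar>x\<bar> \<bar>y\<bar>) ^ e)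
          \<le> 8 * (6 * (C + 1)) * 33 ^ 4 * a (max \<bar>x\<bar> \<bar>y\<bar>)"
proof -
  have Cb: "0 < 6 * (C + 1)" using C by simp
  have aM: "0 < a (max \<bar>x\<bar> \<bar>y\<bar>)" by (rule apos)
  show ?thesis
  proof (cases "max \<bar>x\<bar> \<bar>y\<bar> \<le> 1 \<or> (1 \<le> max \<bar>x\<bar> \<bar>y\<bar> \<and> 2 * \<bar>x + y\<bar> \<le> max \<bar>x\<bar> \<bar>y\<bar>)")
    case True
    from FF_AB[OF refl k e True]
    have "\<bar>FF (Da a) (ww \<alpha> \<beta>) (\<alpha> + \<beta> + 1 + e) (x, y)\<bar> * (jbr x ^ \<alpha> * jbr y ^ \<beta> * jbr (max \<bar>x\<bar> \<bar>y\<bar>) ^ e)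
          \<le> 32 * (6 * (C + 1)) * a (max \<bar>x\<bar> \<bar>y\<bar>)" .
    also have "\<dots> \<le> 8 * (6 * (C + 1)) * 33 ^ 4 * a (max \<bar>x\<bar> \<bar>y\<bar>)"
      using Cb aM by (intro mult_right_mono) auto
    finally show ?thesis .
  next
    case False
    then have M1: "1 \<le> max \<bar>x\<bar> \<bar>y\<bar>" and sg: "max \<bar>x\<bar> \<bar>y\<bar> \<le> 2 * \<bar>x + y\<bar>" by auto
    from FF_C[OF M1 sg, where n="\<alpha>+\<beta>" and \<alpha>=\<alpha> and \<beta>=\<beta> and e=e] k e
    have "\<bar>FF (Da a) (ww \<alpha> \<beta>) (\<alpha> + \<beta> + 1 + e) (x, y)\<bar> * (jbr x ^ \<alpha> * jbr y ^ \<beta> * jbr (max \<bar>x\<bar> \<bar>y\<bar>) ^ e)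
          \<le> 8 * (6 * (C + 1)) * 33 ^ (\<alpha> + \<beta>) * a (max \<bar>x\<bar> \<bar>y\<bar>)" by simp
    also have "\<dots> \<le> 8 * (6 * (C + 1)) * 33 ^ 4 * a (max \<bar>x\<bar> \<bar>y\<bar>)"
    proof -
      have "(33::real) ^ (\<alpha> + \<beta>) \<le> 33 ^ 4" using k by (intro power_increasing) auto
      then show ?thesis using Cb aM by (intro mult_right_mono mult_left_mono) auto
    qed
    finally show ?thesis .
  qed
qed

lemma deriv_sign: "0 \<le> s * deriv a s"
proof -
  have d: "(a has_real_derivative deriv a s) (at s)" using A_der[OF sa, of 0 s] by simp
  show ?thesis
  proof (cases "s \<ge> 0")
    case True
    have "deriv a s \<ge> 0"
    proof (rule ccontr)
      assume "\<not> deriv a s \<ge> 0"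
      then obtain d where "d > 0" "\<And>h. h > 0 \<Longrightarrow> h < d \<Longrightarrow> a s > a (s + h)"
        using DERIV_neg_dec_right[OF d] by force
      then have "a s > a (s + d/2)" by simp
      moreover have "a s \<le> a (s + d/2)" using True \<open>d > 0\<close> by (intro amono) auto
      ultimately show False by simp
    qed
    then show ?thesis using True by simp
  next
    case False
    have "deriv a s \<le> 0"
    proof (rule ccontr)
      assume "\<not> deriv a s \<le> 0"
      then obtain d where "d > 0" "\<And>h. h > 0 \<Longrightarrow> h < d \<Longrightarrow> a (s - h) < a s"
        using DERIV_pos_inc_left[OF d] by force
      then have "a (s - d/2) < a s" by simp
      moreover have "a \<bar>s\<bar> \<le> a \<bar>s - d/2\<bar>" using False \<open>d > 0\<close> by (intro amono) auto
      ultimately show False by (simp add: aabs)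
    qed
    then show ?thesis using False by (simp add: mult_nonpos_nonpos)
  qed
qed

lemma low_aux:
  fixes u v :: real
  assumes uv: "\<bar>v\<bar> \<le> \<bar>u\<bar>" and s: "u + v \<noteq> 0"
  shows "a u / 2 \<le> (u * a u + v * a v) / (u + v)"
proof -
  define A where "A = a u"
  define B where "B = a v"
  have BA: "B \<le> A" unfolding A_def B_def using a_le[of v "\<bar>u\<bar>"] uv aabs[of u] by simp
  have B0: "0 < B" unfolding B_def by (rule apos)
  show ?thesis
  proof (cases "u + v > 0")
    case True
    have "A * (u + v) \<le> 2 * (u * A + v * B)"
    proof (cases "v \<ge> 0")
      case True
      then have "v \<le> u" using uv \<open>u + v > 0\<close> by linarith
      then have 1: "0 \<le> A * (u - v)" using B0 BA by simp
      have 2: "0 \<le> v * B" using True B0 by simp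
      show ?thesis using 1 2 by (simp add: algebra_simps)
    next
      case False
      then have 1: "v * A \<le> v * B" using BA by (simp add: mult_left_mono_neg)
      have 2: "0 \<le> A * (u + v)" using \<open>u + v > 0\<close> BA B0 by simp
      show ?thesis using 1 2 by (simp add: algebra_simps)
    qed
    then show ?thesis unfolding A_def[symmetric] B_def[symmetric] using True by (simp add: field_simps)
  next
    case False
    then have neg: "u + v < 0" using s by linarith
    have "A * (u + v) \<ge> 2 * (u * A + v * B)"
    proof (cases "v \<le> 0")
      case True
      then have "u \<le> v" using uv neg by linarith
      then have 1: "A * (u - v) \<le> 0" using B0 BA by (simp add: mult_nonneg_nonpos)
      have 2: "v * B \<le> 0" using True B0 by (simp add: mult_nonpos_nonneg)
      show ?thesis using 1 2 by (simp add: algebra_simps)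
    next
      case False
      then have 1: "v * B \<le> v * A" using BA by (simp add: mult_left_mono)
      have 2: "A * (u + v) \<le> 0" using neg BA B0 by (simp add: mult_nonneg_nonpos)
      show ?thesis using 1 2 by (simp add: algebra_simps)
    qed
    then show ?thesis unfolding A_def[symmetric] B_def[symmetric] using neg by (simp add: field_simps)
  qed
qed


lemma pd1_ww: "pd1 (FF (Da a) (ww \<alpha> \<beta>) k) = FF (Da a) (ww (Suc \<alpha>) \<beta>) (Suc k)"
proof -
  have "(\<lambda>t. t * ww \<alpha> \<beta> t) = ww (Suc \<alpha>) \<beta>" by (simp add: ww_def fun_eq_iff mult_ac)
  then show ?thesis using FF_pd1[of "Da a", OF DaD ww_cont] by simp
qed

lemma pd2_ww: "pd2 (FF (Da a) (ww \<alpha> \<beta>) k) = FF (Da a) (ww \<alpha> (Suc \<beta>)) (Suc k)"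
proof -
  have "(\<lambda>t. (t - 1) * ww \<alpha> \<beta> t) = ww \<alpha> (Suc \<beta>)" by (simp add: ww_def fun_eq_iff mult_ac)
  then show ?thesis using FF_pd2[of "Da a", OF DaD ww_cont] by simp
qed

lemma pd2_pow: "(pd2^^m) (FF (Da a) (ww \<alpha> \<beta>) k) = FF (Da a) (ww \<alpha> (\<beta> + m)) (k + m)"
  by (induction m) (simp_all add: pd2_ww)

lemma pd1_pow: "(pd1^^m) (FF (Da a) (ww \<alpha> \<beta>) k) = FF (Da a) (ww (\<alpha> + m) \<beta>) (k + m)"
  by (induction m) (simp_all add: pd1_ww)

lemma ww00: "ww 0 0 = (\<lambda>t. 1)" by (simp add: ww_def fun_eq_iff)

lemma Q_closed:
  assumes s: "x + y \<noteq> 0"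
  shows "FF (Da a) (ww 0 0) 1 (x, y) = (x * a x + y * a y) / (x + y)"
proof -
  have "FF (Da a) (ww 0 0) (Suc 0) (x, y) = (ww 0 0 1 * Da a 0 x - ww 0 0 0 * Da a 0 (- y)) / (x + y) - FF (Da a) (\<lambda>t. 0) 0 (x, y) / (x + y)"
    by (rule FF_ibp[of "Da a" "ww 0 0" "\<lambda>t. 0" x y 0, OF DaD _ _ s]) (auto simp: ww00)
  then show ?thesis by (simp add: ww00 FF_def Da_def aeven)
qed

lemma Q_diag: "FF (Da a) (ww 0 0) 1 (x, - x) = x * deriv a x + a x"
  unfolding FF_def ww00 Da_def using Dform[OF sa, of 1] by simp

lemma Q_low: "a (max \<bar>x\<bar> \<bar>y\<bar>) \<le> 2 * FF (Da a) (ww 0 0) 1 (x, y)"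
proof (cases "x + y = 0")
  case True
  then have y: "y = - x" by linarith
  have "a (max \<bar>x\<bar> \<bar>y\<bar>) = a x" using y aabs[of x] by simp
  also have "\<dots> \<le> x * deriv a x + a x" using deriv_sign[of x] by simp
  finally show ?thesis using Q_diag[of x] y deriv_sign[of x] apos[of x] by simp
next
  case False
  show ?thesis
  proof (cases "\<bar>y\<bar> \<le> \<bar>x\<bar>")
    case True
    then have "a (max \<bar>x\<bar> \<bar>y\<bar>) = a x" using aabs[of x] by (simp add: max_def)
    moreover have "a x / 2 \<le> FF (Da a) (ww 0 0) 1 (x, y)" using low_aux[OF True False] Q_closed[OF False] by simp
    ultimately show ?thesis by simp
  next
    case nt: False
    then have "a (max \<bar>x\<bar> \<bar>y\<bar>) = a y" using aabs[of y] by (simp add: max_def)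
    moreover have "y + x \<noteq> 0" using False by simp
    moreover have "a y / 2 \<le> FF (Da a) (ww 0 0) 1 (x, y)" using low_aux[of x y] nt Q_closed[OF False] by (simp add: add.commute)
    ultimately show ?thesis by simp
  qed
qed

lemma main_body:
  defines "K \<equiv> 8 * (6 * (C + 1)) * 33 ^ 4 :: real"
  shows "\<exists>Q. smooth2 Q \<and> (\<forall>z. Q z > 0) \<and>
      (\<forall>x y. x + y \<noteq> 0 \<longrightarrow> Q (x, y) = (x * a x + y * a y) / (x + y)) \<and>
      (\<forall>x y. Q (x, y) = integral {0..1} (\<lambda>t. deriv (\<lambda>s. s * a s) (- y + (x + y) * t))) \<and>
      (\<forall>x y. a (max \<bar>x\<bar> \<bar>y\<bar>) \<le> K * Q (x, y) \<and> Q (x, y) \<le> K * a (max \<bar>x\<bar> \<bar>y\<bar>)) \<and>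
      (\<forall>g1 g2 :: nat. \<forall>x y. 1 \<le> g1 + g2 \<and> g1 + g2 \<le> 3 \<longrightarrow>
         \<bar>(pd1 ^^ g1) ((pd2 ^^ g2) Q) (x, y)\<bar>
           \<le> K * a (max \<bar>x\<bar> \<bar>y\<bar>) / (jbr x ^ g1 * jbr y ^ g2)) \<and>
      (\<forall>g1 g2 :: nat. \<forall>x y. g1 + g2 \<le> 3 \<longrightarrow>
         \<bar>(pd1 ^^ g1) ((pd2 ^^ g2) (\<lambda>z. pd1 Q z - pd2 Q z)) (x, y)\<bar>
           \<le> K * a (max \<bar>x\<bar> \<bar>y\<bar>) / (jbr x ^ g1 * jbr y ^ g2 * jbr (max \<bar>x\<bar> \<bar>y\<bar>)))"
proof (intro exI[of _ "FF (Da a) (ww 0 0) 1"] conjI allI impI)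
  define Q where "Q = FF (Da a) (ww 0 0) 1"
  have K2: "2 \<le> K" unfolding K_def using C by simp
  show "smooth2 (FF (Da a) (ww 0 0) 1)" by (rule smooth2_FF[of "Da a", OF DaD ww_cont])
  show "FF (Da a) (ww 0 0) 1 z > 0" for z
    using Q_low[of "fst z" "snd z"] apos[of "max \<bar>fst z\<bar> \<bar>snd z\<bar>"] by simp
  show "FF (Da a) (ww 0 0) 1 (x, y) = (x * a x + y * a y) / (x + y)" if "x + y \<noteq> 0" for x y
    using Q_closed[OF that] .
  show "FF (Da a) (ww 0 0) 1 (x, y) = integral {0..1} (\<lambda>t. deriv (\<lambda>s. s * a s) (- y + (x + y) * t))" for x y
    by (simp add: FF_def ww00 Da_def)
  show "a (max \<bar>x\<bar> \<bar>y\<bar>) \<le> K * FF (Da a) (ww 0 0) 1 (x, y)" for x y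
  proof -
    have "0 \<le> FF (Da a) (ww 0 0) 1 (x, y)"
      using Q_low[of x y] apos[of "max \<bar>x\<bar> \<bar>y\<bar>"] by simp
    then have "2 * FF (Da a) (ww 0 0) 1 (x, y) \<le> K * FF (Da a) (ww 0 0) 1 (x, y)"
      using K2 by (intro mult_right_mono) auto
    then show ?thesis using Q_low[of x y] by linarith
  qed
  show "FF (Da a) (ww 0 0) 1 (x, y) \<le> K * a (max \<bar>x\<bar> \<bar>y\<bar>)" for x y
    using FF_main[of 0 0 0 x y] unfolding K_def by simp
  show "\<bar>(pd1 ^^ g1) ((pd2 ^^ g2) (FF (Da a) (ww 0 0) 1)) (x, y)\<bar>
           \<le> K * a (max \<bar>x\<bar> \<bar>y\<bar>) / (jbr x ^ g1 * jbr y ^ g2)"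
    if "1 \<le> g1 + g2 \<and> g1 + g2 \<le> 3" for g1 g2 x y
  proof -
    have e: "(pd1 ^^ g1) ((pd2 ^^ g2) (FF (Da a) (ww 0 0) 1)) = FF (Da a) (ww g1 g2) (g1 + g2 + 1 + 0)"
      by (simp add: pd1_pow pd2_pow add_ac)
    have "\<bar>FF (Da a) (ww g1 g2) (g1 + g2 + 1 + 0) (x, y)\<bar> * (jbr x ^ g1 * jbr y ^ g2 * jbr (max \<bar>x\<bar> \<bar>y\<bar>) ^ 0) \<le> K * a (max \<bar>x\<bar> \<bar>y\<bar>)"
      unfolding K_def by (rule FF_main) (use that in auto)
    then show ?thesis unfolding e using jbr_pos by (simp add: pos_le_divide_eq)
  qed
  show "\<bar>(pd1 ^^ g1) ((pd2 ^^ g2) (\<lambda>z. pd1 (FF (Da a) (ww 0 0) 1) z - pd2 (FF (Da a) (ww 0 0) 1) z)) (x, y)\<bar>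
           \<le> K * a (max \<bar>x\<bar> \<bar>y\<bar>) / (jbr x ^ g1 * jbr y ^ g2 * jbr (max \<bar>x\<bar> \<bar>y\<bar>))"
    if "g1 + g2 \<le> 3" for g1 g2 x y
  proof -
    have d: "(\<lambda>z. pd1 (FF (Da a) (ww 0 0) 1) z - pd2 (FF (Da a) (ww 0 0) 1) z) = FF (Da a) (ww 0 0) 2"
    proof
      fix z
      have "pd1 (FF (Da a) (ww 0 0) 1) z - pd2 (FF (Da a) (ww 0 0) 1) z = FF (Da a) (ww 1 0) 2 z - FF (Da a) (ww 0 1) 2 z"
        by (simp add: pd1_ww pd2_ww numeral_2_eq_2)
      also have "\<dots> = FF (Da a) (\<lambda>t. ww 1 0 t - ww 0 1 t) 2 z"
        by (rule FF_diff[of "Da a", OF DaD ww_cont ww_cont])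
      also have "(\<lambda>t. ww 1 0 t - ww 0 1 t) = ww 0 0" by (simp add: ww_def fun_eq_iff)
      finally show "pd1 (FF (Da a) (ww 0 0) 1) z - pd2 (FF (Da a) (ww 0 0) 1) z = FF (Da a) (ww 0 0) 2 z" .
    qed
    have e: "(pd1 ^^ g1) ((pd2 ^^ g2) (FF (Da a) (ww 0 0) 2)) = FF (Da a) (ww g1 g2) (g1 + g2 + 1 + 1)"
      by (simp add: pd1_pow pd2_pow add_ac)
    have "\<bar>FF (Da a) (ww g1 g2) (g1 + g2 + 1 + 1) (x, y)\<bar> * (jbr x ^ g1 * jbr y ^ g2 * jbr (max \<bar>x\<bar> \<bar>y\<bar>) ^ 1) \<le> K * a (max \<bar>x\<bar> \<bar>y\<bar>)"
      unfolding K_def by (rule FF_main) (use that in auto)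
    then show ?thesis unfolding d e using jbr_pos by (simp add: pos_le_divide_eq)
  qed
qed

end

theorem lemma4p4:
  fixes C :: real
  assumes "C > 0"
  shows "\<exists>K>0. \<forall>a. smooth1 a \<and> condA C a \<longrightarrow>
    (\<exists>Q. smooth2 Q \<and> (\<forall>z. Q z > 0) \<and>
      (\<forall>x y. x + y \<noteq> 0 \<longrightarrow> Q (x, y) = (x * a x + y * a y) / (x + y)) \<and>
      (\<forall>x y. Q (x, y) = integral {0..1} (\<lambda>t. deriv (\<lambda>s. s * a s) (- y + (x + y) * t))) \<and>
      (\<forall>x y. a (max \<bar>x\<bar> \<bar>y\<bar>) \<le> K * Q (x, y) \<and> Q (x, y) \<le> K * a (max \<bar>x\<bar> \<bar>y\<bar>)) \<and>
      (\<forall>g1 g2 :: nat. \<forall>x y. 1 \<le> g1 + g2 \<and> g1 + g2 \<le> 3 \<longrightarrow>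
         \<bar>(pd1 ^^ g1) ((pd2 ^^ g2) Q) (x, y)\<bar>
           \<le> K * a (max \<bar>x\<bar> \<bar>y\<bar>) / (jbr x ^ g1 * jbr y ^ g2)) \<and>
      (\<forall>g1 g2 :: nat. \<forall>x y. g1 + g2 \<le> 3 \<longrightarrow>
         \<bar>(pd1 ^^ g1) ((pd2 ^^ g2) (\<lambda>z. pd1 Q z - pd2 Q z)) (x, y)\<bar>
           \<le> K * a (max \<bar>x\<bar> \<bar>y\<bar>) / (jbr x ^ g1 * jbr y ^ g2 * jbr (max \<bar>x\<bar> \<bar>y\<bar>))))"
  using assms by (intro exI[of _ "8 * (6 * (C + 1)) * 33 ^ 4"] conjI allI impI cA.main_body) (auto simp: cA_def)

end
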